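(* Let $S$ be a semigroup with identity element and group of units $G$, and suppose $S\setminus G$ is a subsemigroup of $S$. Then $G$ is a completely isolated subsemigroup of $S$, and the map $T\mapsto T\cup G$ is a bijection from the set of completely isolated subsemigroups of $S$ that are disjoint from $G$ onto the set of completely isolated subsemigroups of $S$ that contain $G$ as a proper subsemigroup.
   Context: A subsemigroup $T$ of a semigroup $S$ is completely isolated if for all $a,b\in S$, $ab\in T$ implies $a\in T$ or $b\in T$. *)

theory Defs
  imports "HOL-Algebra.Group"
begin

definition subsemigroup :: "('a, 'b) monoid_scheme \<Rightarrow> 'a set \<Rightarrow> bool" where
  "subsemigroup S T \<longleftrightarrow> T \<noteq> {} \<and> T \<subseteq> carrier S \<and>
     (\<forall>a\<in>T. \<forall>b\<in>T. a \<otimes>\<^bsub>S\<^esub> b \<in> T)"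

definition completely_isolated :: "('a, 'b) monoid_scheme \<Rightarrow> 'a set \<Rightarrow> bool" where
  "completely_isolated S T \<longleftrightarrow> subsemigroup S T \<and>
     (\<forall>a\<in>carrier S. \<forall>b\<in>carrier S. a \<otimes>\<^bsub>S\<^esub> b \<in> T \<longrightarrow> a \<in> T \<or> b \<in> T)"

end

theory Submission
  imports Defs
begin

lemma key:
  assumes "monoid S" and "subsemigroup S (carrier S - Units S)"
    and "a \<in> carrier S" "b \<in> carrier S" "a \<otimes>\<^bsub>S\<^esub> b \<in> Units S"
  shows "a \<in> Units S \<and> b \<in> Units S"
proof -
  interpret monoid S by fact
  have "a \<in> Units S \<or> b \<in> Units S"
    using assms(2-5) unfolding subsemigroup_def by blast
  then show ?thesis
  proof
    assume a: "a \<in> Units S"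
    have "b = inv\<^bsub>S\<^esub> a \<otimes>\<^bsub>S\<^esub> (a \<otimes>\<^bsub>S\<^esub> b)" using a assms(4)
      by (simp add: m_assoc[symmetric] Units_l_inv Units_closed Units_inv_closed)
    then show ?thesis using a assms(5) by (metis Units_inv_Units Units_m_closed)
  next
    assume b: "b \<in> Units S"
    have "a = (a \<otimes>\<^bsub>S\<^esub> b) \<otimes>\<^bsub>S\<^esub> inv\<^bsub>S\<^esub> b" using b assms(3)
      by (simp add: m_assoc Units_r_inv Units_closed Units_inv_closed)
    then show ?thesis using b assms(5) by (metis Units_inv_Units Units_m_closed)
  qed
qed

theorem mainTheorem19:
  fixes S :: "('a, 'b) monoid_scheme"
  assumes "monoid S"
    and "subsemigroup S (carrier S - Units S)"
  shows "completely_isolated S (Units S) \<and>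
         bij_betw (\<lambda>T. T \<union> Units S)
           {T. completely_isolated S T \<and> T \<inter> Units S = {}}
           {T. completely_isolated S T \<and> Units S \<subset> T}"
proof -
  interpret monoid S by fact
  note K = key[OF assms]
  have GU: "Units S \<subseteq> carrier S" by (auto simp: Units_closed)
  have G: "completely_isolated S (Units S)"
    unfolding completely_isolated_def subsemigroup_def
  proof (intro conjI ballI impI)
    show "Units S \<noteq> {}" using Units_one_closed by blast
    show "Units S \<subseteq> carrier S" by (rule GU)
    fix a b assume "a \<in> Units S" "b \<in> Units S"
    thus "a \<otimes>\<^bsub>S\<^esub> b \<in> Units S" by (rule Units_m_closed)
  next
    fix a b assume "a \<in> carrier S" "b \<in> carrier S" "a \<otimes>\<^bsub>S\<^esub> b \<in> Units S"
    thus "a \<in> Units S \<or> b \<in> Units S" using K by blast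
  qed
  have img: "T \<union> Units S \<in> {T. completely_isolated S T \<and> Units S \<subset> T}"
    if T: "completely_isolated S T" "T \<inter> Units S = {}" for T
  proof -
    have TC: "T \<subseteq> carrier S" "T \<noteq> {}" using T(1) unfolding completely_isolated_def subsemigroup_def by auto
    have cl: "\<And>a b. a \<in> T \<Longrightarrow> b \<in> T \<Longrightarrow> a \<otimes>\<^bsub>S\<^esub> b \<in> T"
      and iso: "\<And>a b. a \<in> carrier S \<Longrightarrow> b \<in> carrier S \<Longrightarrow> a \<otimes>\<^bsub>S\<^esub> b \<in> T \<Longrightarrow> a \<in> T \<or> b \<in> T"
      using T(1) unfolding completely_isolated_def subsemigroup_def by auto
    have r: "t \<otimes>\<^bsub>S\<^esub> g \<in> T" if "t \<in> T" "g \<in> Units S" for t g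
    proof -
      have tc: "t \<in> carrier S" using that TC by auto
      have "t = (t \<otimes>\<^bsub>S\<^esub> g) \<otimes>\<^bsub>S\<^esub> inv\<^bsub>S\<^esub> g" using that tc
        by (simp add: m_assoc Units_r_inv Units_closed Units_inv_closed)
      hence "(t \<otimes>\<^bsub>S\<^esub> g) \<in> T \<or> inv\<^bsub>S\<^esub> g \<in> T"
        using iso[of "t \<otimes>\<^bsub>S\<^esub> g" "inv\<^bsub>S\<^esub> g"] that tc by (metis Units_closed Units_inv_closed m_closed)
      thus ?thesis using T(2) that(2) by (auto dest: Units_inv_Units)
    qed
    have l: "g \<otimes>\<^bsub>S\<^esub> t \<in> T" if "t \<in> T" "g \<in> Units S" for t g
    proof -
      have tc: "t \<in> carrier S" using that TC by auto
      have "t = inv\<^bsub>S\<^esub> g \<otimes>\<^bsub>S\<^esub> (g \<otimes>\<^bsub>S\<^esub> t)" using that tc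
        by (simp add: m_assoc[symmetric] Units_l_inv Units_closed Units_inv_closed)
      hence "inv\<^bsub>S\<^esub> g \<in> T \<or> (g \<otimes>\<^bsub>S\<^esub> t) \<in> T"
        using iso[of "inv\<^bsub>S\<^esub> g" "g \<otimes>\<^bsub>S\<^esub> t"] that tc by (metis Units_closed Units_inv_closed m_closed)
      thus ?thesis using T(2) that(2) by (auto dest: Units_inv_Units)
    qed
    have "completely_isolated S (T \<union> Units S)"
      unfolding completely_isolated_def subsemigroup_def
    proof (intro conjI ballI impI)
      show "T \<union> Units S \<noteq> {}" using TC by blast
      show "T \<union> Units S \<subseteq> carrier S" using TC GU by blast
      fix a b assume a: "a \<in> T \<union> Units S" and b: "b \<in> T \<union> Units S"
      show "a \<otimes>\<^bsub>S\<^esub> b \<in> T \<union> Units S"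
      proof (cases "a \<in> T")
        case True
        then show ?thesis using b cl r by blast
      next
        case False
        then have "a \<in> Units S" using a by blast
        then show ?thesis using b l Units_m_closed by blast
      qed
    next
      fix a b assume ab: "a \<in> carrier S" "b \<in> carrier S" "a \<otimes>\<^bsub>S\<^esub> b \<in> T \<union> Units S"
      show "a \<in> T \<union> Units S \<or> b \<in> T \<union> Units S"
      proof (cases "a \<otimes>\<^bsub>S\<^esub> b \<in> T")
        case True thus ?thesis using iso ab by blast
      next
        case False thus ?thesis using K ab by blast
      qed
    qed
    moreover have "Units S \<subset> T \<union> Units S" using TC T(2) by blast
    ultimately show ?thesis by simp
  qed
  have surj: "U \<in> (\<lambda>T. T \<union> Units S) ` {T. completely_isolated S T \<and> T \<inter> Units S = {}}"
    if U: "completely_isolated S U" "Units S \<subset> U" for U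
  proof -
    have UC: "U \<subseteq> carrier S" using U(1) unfolding completely_isolated_def subsemigroup_def by auto
    have cl: "\<And>a b. a \<in> U \<Longrightarrow> b \<in> U \<Longrightarrow> a \<otimes>\<^bsub>S\<^esub> b \<in> U"
      and iso: "\<And>a b. a \<in> carrier S \<Longrightarrow> b \<in> carrier S \<Longrightarrow> a \<otimes>\<^bsub>S\<^esub> b \<in> U \<Longrightarrow> a \<in> U \<or> b \<in> U"
      using U(1) unfolding completely_isolated_def subsemigroup_def by auto
    have iso2: "a \<in> U - Units S \<or> b \<in> U - Units S"
      if ab: "a \<in> carrier S" "b \<in> carrier S" "a \<otimes>\<^bsub>S\<^esub> b \<in> U - Units S" for a b
    proof -
      have nb: "\<not> (a \<in> Units S \<and> b \<in> Units S)" using ab Units_m_closed by auto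
      from iso[OF ab(1,2)] ab(3) have "a \<in> U \<or> b \<in> U" by auto
      thus ?thesis
      proof
        assume a: "a \<in> U"
        show ?thesis
        proof (cases "a \<in> Units S")
          case True
          have "b = inv\<^bsub>S\<^esub> a \<otimes>\<^bsub>S\<^esub> (a \<otimes>\<^bsub>S\<^esub> b)" using True ab
            by (simp add: m_assoc[symmetric] Units_l_inv Units_closed Units_inv_closed)
          moreover have "inv\<^bsub>S\<^esub> a \<in> U" using True U(2) by auto
          ultimately have "b \<in> U" using cl ab(3) by (metis DiffD1)
          thus ?thesis using nb True by auto
        qed (use a in auto)
      next
        assume b: "b \<in> U"
        show ?thesis
        proof (cases "b \<in> Units S")
          case True
          have "a = (a \<otimes>\<^bsub>S\<^esub> b) \<otimes>\<^bsub>S\<^esub> inv\<^bsub>S\<^esub> b" using True ab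
            by (simp add: m_assoc Units_r_inv Units_closed Units_inv_closed)
          moreover have "inv\<^bsub>S\<^esub> b \<in> U" using True U(2) by auto
          ultimately have "a \<in> U" using cl ab(3) by (metis DiffD1)
          thus ?thesis using nb True by auto
        qed (use b in auto)
      qed
    qed
    have "completely_isolated S (U - Units S)"
      unfolding completely_isolated_def subsemigroup_def
    proof (intro conjI ballI impI)
      show "U - Units S \<noteq> {}" using U(2) by blast
      show "U - Units S \<subseteq> carrier S" using UC by blast
      fix a b assume "a \<in> U - Units S" "b \<in> U - Units S"
      thus "a \<otimes>\<^bsub>S\<^esub> b \<in> U - Units S" using cl K UC by blast
    next
      fix a b assume "a \<in> carrier S" "b \<in> carrier S" "a \<otimes>\<^bsub>S\<^esub> b \<in> U - Units S"
      thus "a \<in> U - Units S \<or> b \<in> U - Units S" by (rule iso2)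
    qed
    moreover have "U = (U - Units S) \<union> Units S" using U(2) by blast
    ultimately show ?thesis by blast
  qed
  have "bij_betw (\<lambda>T. T \<union> Units S)
           {T. completely_isolated S T \<and> T \<inter> Units S = {}}
           {T. completely_isolated S T \<and> Units S \<subset> T}"
    unfolding bij_betw_def
  proof (intro conjI)
    show "inj_on (\<lambda>T. T \<union> Units S) {T. completely_isolated S T \<and> T \<inter> Units S = {}}"
    proof (rule inj_onI)
      fix X Y assume X: "X \<in> {T. completely_isolated S T \<and> T \<inter> Units S = {}}"
        and Y: "Y \<in> {T. completely_isolated S T \<and> T \<inter> Units S = {}}"
        and e: "X \<union> Units S = Y \<union> Units S"
      have "X = (X \<union> Units S) - Units S" using X by auto
      also have "\<dots> = (Y \<union> Units S) - Units S" using e by simp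
      also have "\<dots> = Y" using Y by auto
      finally show "X = Y" .
    qed
    show "(\<lambda>T. T \<union> Units S) ` {T. completely_isolated S T \<and> T \<inter> Units S = {}} =
          {T. completely_isolated S T \<and> Units S \<subset> T}"
    proof
      show "(\<lambda>T. T \<union> Units S) ` {T. completely_isolated S T \<and> T \<inter> Units S = {}}
        \<subseteq> {T. completely_isolated S T \<and> Units S \<subset> T}"
        using img by (intro image_subsetI) simp
      show "{T. completely_isolated S T \<and> Units S \<subset> T} \<subseteq> (\<lambda>T. T \<union> Units S) ` {T. completely_isolated S T \<and> T \<inter> Units S = {}}"
        using surj by (intro subsetI) simp
    qed
  qed
  with G show ?thesis by blast
qed

end
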